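(* Let $R,S$ be rings and $M$ an $(S,R)$-bimodule such that the coinduction functor $G={}_S\mathrm{Hom}(M,\bullet):{}_S\mathcal{M}\to{}_R\mathcal{M}$ is naturally full, and let $\sum_{i=1}^n m_i\otimes_R f_i\in(M\otimes_R{}^*M)^S$ satisfy $m\otimes_R\mathrm{id}_M=\sum_{i=1}^n m_i\otimes_R((?)f_i\,m)$ in $M\otimes_R{}_S\mathrm{End}(M)$ for all $m\in M$. Then $e=\sum_{i=1}^n (m_i)f_i$ is a central idempotent of $S$, and $sm=sem=esem$ for all $s\in S$, $m\in M$. Therefore $S\cong S_1\times S_2$ where $S_1=eSe$, $S$ acts on $M$ via $S_1$, and $M$ is a generator in ${}_{S_1}\mathcal{M}$.
   Context: Left $S$-linear maps are written on the right: $(m)f$. For $Q\in{}_S\mathcal{M}$, ${}_S\mathrm{Hom}(M,Q)$ is a left $R$-module via $(m)(r\cdot f)=(mr)f$; ${}^*M={}_S\mathrm{Hom}(M,S)$ is an $(R,S)$-bimodule via $(m)(r\cdot f\cdot s)=((mr)f)s$; $(M\otimes_R{}^*M)^S=\{x: sx=xs\ \forall s\in S\}$. $(?)f_i\,m$ denotes the endomorphism $x\mapsto((x)f_i)m$ of $M$. A functor $F:\mathcal{A}\to\mathcal{B}$ is naturally full if there are maps $\mathcal{P}_{A,A'}:\mathrm{Hom}_{\mathcal{B}}(FA,FA')\to\mathrm{Hom}_{\mathcal{A}}(A,A')$, natural in $A,A'$, with $F(\mathcal{P}_{A,A'}(u))=u$ for all $u$. *)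

theory Defs
  imports Main "HOL-Library.FuncSet"
begin

text \<open>A left module over the scalars K (a subset of the ring type 's, with unit u):
  carrier, addition, zero and scalar action.  Left S-modules are the case K = UNIV, u = 1.\<close>

record ('s, 'q) lmodule =
  carrier :: "'q set"
  plus    :: "'q \<Rightarrow> 'q \<Rightarrow> 'q"
  zero    :: "'q"
  smult   :: "'s \<Rightarrow> 'q \<Rightarrow> 'q"

definition is_lmod_on :: "'s::ring_1 set \<Rightarrow> 's \<Rightarrow> ('s, 'q) lmodule \<Rightarrow> bool" where
  "is_lmod_on K u A \<longleftrightarrow>
     zero A \<in> carrier A \<and>
     (\<forall>x\<in>carrier A. \<forall>y\<in>carrier A. plus A x y \<in> carrier A) \<and>
     (\<forall>x\<in>carrier A. \<forall>y\<in>carrier A. \<forall>z\<in>carrier A. plus A (plus A x y) z = plus A x (plus A y z)) \<and>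
     (\<forall>x\<in>carrier A. \<forall>y\<in>carrier A. plus A x y = plus A y x) \<and>
     (\<forall>x\<in>carrier A. plus A (zero A) x = x) \<and>
     (\<forall>x\<in>carrier A. \<exists>y\<in>carrier A. plus A x y = zero A) \<and>
     (\<forall>k\<in>K. \<forall>x\<in>carrier A. smult A k x \<in> carrier A) \<and>
     (\<forall>k\<in>K. \<forall>x\<in>carrier A. \<forall>y\<in>carrier A. smult A k (plus A x y) = plus A (smult A k x) (smult A k y)) \<and>
     (\<forall>k\<in>K. \<forall>l\<in>K. \<forall>x\<in>carrier A. smult A (k + l) x = plus A (smult A k x) (smult A l x)) \<and>
     (\<forall>k\<in>K. \<forall>l\<in>K. \<forall>x\<in>carrier A. smult A (k * l) x = smult A k (smult A l x)) \<and>
     (\<forall>x\<in>carrier A. smult A u x = x)"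

abbreviation is_lmod :: "('s::ring_1, 'q) lmodule \<Rightarrow> bool" where
  "is_lmod A \<equiv> is_lmod_on UNIV 1 A"

definition lhom_on :: "'s set \<Rightarrow> ('s, 'a) lmodule \<Rightarrow> ('s, 'b) lmodule \<Rightarrow> ('a \<Rightarrow> 'b) set" where
  "lhom_on K A B = {f. f \<in> extensional (carrier A) \<and> f ` carrier A \<subseteq> carrier B \<and>
     (\<forall>x\<in>carrier A. \<forall>y\<in>carrier A. f (plus A x y) = plus B (f x) (f y)) \<and>
     (\<forall>k\<in>K. \<forall>x\<in>carrier A. f (smult A k x) = smult B k (f x))}"

abbreviation lhom :: "('s, 'a) lmodule \<Rightarrow> ('s, 'b) lmodule \<Rightarrow> ('a \<Rightarrow> 'b) set" where
  "lhom A B \<equiv> lhom_on UNIV A B"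

definition bimodule :: "('s::ring_1 \<Rightarrow> 'm::ab_group_add \<Rightarrow> 'm) \<Rightarrow> ('m \<Rightarrow> 'r::ring_1 \<Rightarrow> 'm) \<Rightarrow> bool" where
  "bimodule ls rs \<longleftrightarrow>
     (\<forall>s m m'. ls s (m + m') = ls s m + ls s m') \<and>
     (\<forall>s t m. ls (s + t) m = ls s m + ls t m) \<and>
     (\<forall>s t m. ls (s * t) m = ls s (ls t m)) \<and>
     (\<forall>m. ls 1 m = m) \<and>
     (\<forall>m m' r. rs (m + m') r = rs m r + rs m' r) \<and>
     (\<forall>m r r'. rs m (r + r') = rs m r + rs m r') \<and>
     (\<forall>m r r'. rs m (r * r') = rs (rs m r) r') \<and>
     (\<forall>m. rs m 1 = m) \<and>
     (\<forall>s m r. ls s (rs m r) = rs (ls s m) r)"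

definition Mmod :: "('s \<Rightarrow> 'm::ab_group_add \<Rightarrow> 'm) \<Rightarrow> ('s, 'm) lmodule" where
  "Mmod ls = \<lparr>carrier = UNIV, plus = (+), zero = 0, smult = ls\<rparr>"

definition Smod :: "('s::ring_1, 's) lmodule" where
  "Smod = \<lparr>carrier = UNIV, plus = (+), zero = 0, smult = (*)\<rparr>"

text \<open>Maps are written on the right in the paper: (m)f is f m here.
  ${}^*M = {}_S\mathrm{Hom}(M,S)$ and ${}_S\mathrm{End}(M)$:\<close>
definition dualM :: "('s::ring_1 \<Rightarrow> 'm::ab_group_add \<Rightarrow> 'm) \<Rightarrow> ('m \<Rightarrow> 's) set" where
  "dualM ls = lhom (Mmod ls) Smod"

definition EndM :: "('s::ring_1 \<Rightarrow> 'm::ab_group_add \<Rightarrow> 'm) \<Rightarrow> ('m \<Rightarrow> 'm) set" where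
  "EndM ls = lhom (Mmod ls) (Mmod ls)"

definition Gobj :: "('s::ring_1 \<Rightarrow> 'm::ab_group_add \<Rightarrow> 'm) \<Rightarrow> ('m \<Rightarrow> 'r \<Rightarrow> 'm) \<Rightarrow>
    ('s, 'q) lmodule \<Rightarrow> ('r, 'm \<Rightarrow> 'q) lmodule" where
  "Gobj ls rs Q = \<lparr>carrier = lhom (Mmod ls) Q,
                   plus = (\<lambda>\<phi> \<psi> m. plus Q (\<phi> m) (\<psi> m)),
                   zero = (\<lambda>m. zero Q),
                   smult = (\<lambda>r \<phi> m. \<phi> (rs m r))\<rparr>"

definition Gmor :: "('s::ring_1 \<Rightarrow> 'm::ab_group_add \<Rightarrow> 'm) \<Rightarrow> ('s, 'q) lmodule \<Rightarrow>
    ('q \<Rightarrow> 'q) \<Rightarrow> (('m \<Rightarrow> 'q) \<Rightarrow> ('m \<Rightarrow> 'q))" where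
  "Gmor ls Q u = (\<lambda>\<phi>\<in>lhom (Mmod ls) Q. u \<circ> \<phi>)"

text \<open>Natural fullness of G, on the full subcategory of S-modules whose carriers live in the
  type 'q.\<close>
definition coind_naturally_full ::
    "('s::ring_1 \<Rightarrow> 'm::ab_group_add \<Rightarrow> 'm) \<Rightarrow> ('m \<Rightarrow> 'r::ring_1 \<Rightarrow> 'm) \<Rightarrow> 'q itself \<Rightarrow> bool" where
  "coind_naturally_full ls rs (_::'q itself) \<longleftrightarrow>
    (\<exists>P :: ('s, 'q) lmodule \<Rightarrow> ('s, 'q) lmodule \<Rightarrow> (('m \<Rightarrow> 'q) \<Rightarrow> ('m \<Rightarrow> 'q)) \<Rightarrow> ('q \<Rightarrow> 'q).
      (\<forall>A B. is_lmod A \<and> is_lmod B \<longrightarrow>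
         (\<forall>u\<in>lhom (Gobj ls rs A) (Gobj ls rs B).
            P A B u \<in> lhom A B \<and> Gmor ls A (P A B u) = u)) \<and>
      (\<forall>A B A1 B1 a b u. is_lmod A \<and> is_lmod B \<and> is_lmod A1 \<and> is_lmod B1 \<and>
         a \<in> lhom A1 A \<and> b \<in> lhom B B1 \<and> u \<in> lhom (Gobj ls rs A) (Gobj ls rs B) \<longrightarrow>
         P A1 B1 (compose (carrier (Gobj ls rs A1)) (Gmor ls B b)
                     (compose (carrier (Gobj ls rs A1)) u (Gmor ls A1 a)))
         = compose (carrier A1) b (compose (carrier A1) (P A B u) a)))"

section \<open>Tensor products over R (as the free abelian group on pairs modulo relations)\<close>

definition delta :: "'a \<times> 'b \<Rightarrow> ('a \<times> 'b \<Rightarrow> int)" where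
  "delta p = (\<lambda>q. if q = p then 1 else 0)"

text \<open>The subgroup of relations defining A \<otimes>_R B, where A = type 'a (right R-module via rsA)
  and B = Bc (a left R-module with addition addB and action lactB); the free abelian group
  on A \<times> B is represented by finitely supported integer-valued functions.\<close>
inductive_set tensor_null ::
    "('a::ab_group_add \<Rightarrow> 'r \<Rightarrow> 'a) \<Rightarrow> 'b set \<Rightarrow> ('b \<Rightarrow> 'b \<Rightarrow> 'b) \<Rightarrow> ('r \<Rightarrow> 'b \<Rightarrow> 'b)
      \<Rightarrow> ('a \<times> 'b \<Rightarrow> int) set"
  for rsA Bc addB lactB where
  tn_zero: "(\<lambda>_. 0) \<in> tensor_null rsA Bc addB lactB"
| tn_diff: "x \<in> tensor_null rsA Bc addB lactB \<Longrightarrow> y \<in> tensor_null rsA Bc addB lactB \<Longrightarrow>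
      (\<lambda>p. x p - y p) \<in> tensor_null rsA Bc addB lactB"
| tn_addl: "b \<in> Bc \<Longrightarrow>
      (\<lambda>p. delta (a + a', b) p - delta (a, b) p - delta (a', b) p) \<in> tensor_null rsA Bc addB lactB"
| tn_addr: "b \<in> Bc \<Longrightarrow> b' \<in> Bc \<Longrightarrow>
      (\<lambda>p. delta (a, addB b b') p - delta (a, b) p - delta (a, b') p) \<in> tensor_null rsA Bc addB lactB"
| tn_bal: "b \<in> Bc \<Longrightarrow>
      (\<lambda>p. delta (rsA a r, b) p - delta (a, lactB r b) p) \<in> tensor_null rsA Bc addB lactB"

definition formal_sum :: "nat \<Rightarrow> (nat \<Rightarrow> 'a) \<Rightarrow> (nat \<Rightarrow> 'b) \<Rightarrow> ('a \<times> 'b \<Rightarrow> int)" where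
  "formal_sum n xs ys = (\<lambda>q. \<Sum>i<n. delta (xs i, ys i) q)"

definition tensor_eq ::
    "('a::ab_group_add \<Rightarrow> 'r \<Rightarrow> 'a) \<Rightarrow> 'b set \<Rightarrow> ('b \<Rightarrow> 'b \<Rightarrow> 'b) \<Rightarrow> ('r \<Rightarrow> 'b \<Rightarrow> 'b)
      \<Rightarrow> nat \<Rightarrow> (nat \<Rightarrow> 'a) \<Rightarrow> (nat \<Rightarrow> 'b) \<Rightarrow> nat \<Rightarrow> (nat \<Rightarrow> 'a) \<Rightarrow> (nat \<Rightarrow> 'b) \<Rightarrow> bool" where
  "tensor_eq rsA Bc addB lactB n xs ys k xs' ys' \<longleftrightarrow>
     (\<lambda>p. formal_sum n xs ys p - formal_sum k xs' ys' p) \<in> tensor_null rsA Bc addB lactB"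

abbreviation tensor_eq_dual where
  "tensor_eq_dual ls rs \<equiv> tensor_eq rs (dualM ls) (\<lambda>f g x. f x + g x) (\<lambda>r f x. f (rs x r))"

abbreviation tensor_eq_End where
  "tensor_eq_End ls rs \<equiv> tensor_eq rs (EndM ls) (\<lambda>f g x. f x + g x) (\<lambda>r f x. f (rs x r))"

primrec msum :: "('s, 'q) lmodule \<Rightarrow> nat \<Rightarrow> (nat \<Rightarrow> 'q) \<Rightarrow> 'q" where
  "msum N 0 g = zero N"
| "msum N (Suc k) g = plus N (msum N k g) (g k)"

text \<open>M is a generator of the category of left modules over the ring K (unit u): every
  K-module N is an epimorphic image of a direct sum of copies of M, i.e. every element of N is
  a finite sum of images of elements of M under K-linear maps M \<rightarrow> N.  Modules N range over
  all carriers in an arbitrary type 'v (universally quantified in the theorem).\<close>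
definition is_generator_on ::
    "'s::ring_1 set \<Rightarrow> 's \<Rightarrow> ('s, 'm) lmodule \<Rightarrow> 'v itself \<Rightarrow> bool" where
  "is_generator_on K u Mo (_::'v itself) \<longleftrightarrow>
     (\<forall>N :: ('s, 'v) lmodule. is_lmod_on K u N \<longrightarrow>
        (\<forall>x\<in>carrier N. \<exists>k hs ms. (\<forall>j<k. hs j \<in> lhom_on K Mo N) \<and>
            x = msum N k (\<lambda>j. hs j (ms j))))"

end

theory Submission
  imports Defs
begin

fun nsc :: "nat \<Rightarrow> 'a::ab_group_add \<Rightarrow> 'a" where
  "nsc 0 v = 0"
| "nsc (Suc n) v = nsc n v + v"

definition zsc :: "int \<Rightarrow> 'a::ab_group_add \<Rightarrow> 'a" where
  "zsc k v = (if 0 \<le> k then nsc (nat k) v else - nsc (nat (-k)) v)"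

lemma zsc_0[simp]: "zsc 0 v = 0" by (simp add: zsc_def)

lemma zsc_succ: "zsc (k + 1) v = zsc k v + v"
proof (cases "0 \<le> k")
  case True
  then have "nat (k+1) = Suc (nat k)" by simp
  then show ?thesis using True by (simp add: zsc_def)
next
  case False
  show ?thesis
  proof (cases "k = -1")
    case True then show ?thesis by (simp add: zsc_def)
  next
    case F2: False
    then have "nat (-k) = Suc (nat (-(k+1)))" using False by simp
    then show ?thesis using False F2 by (simp add: zsc_def)
  qed
qed

lemma zsc_add: "zsc (a + b) v = zsc a v + zsc b v"
proof (induction b rule: int_induct[where k=0])
  case base then show ?case by simp
next
  case (step1 i)
  have "zsc (a + (i+1)) v = zsc ((a + i) + 1) v" by (simp add: add.assoc)
  also have "\<dots> = zsc (a+i) v + v" by (rule zsc_succ)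
  finally show ?case using step1 zsc_succ[of i v] by (simp add: add.assoc)
next
  case (step2 i)
  have a: "zsc i v = zsc (i - 1) v + v" using zsc_succ[of "i - 1" v] by simp
  have b: "zsc (a + i) v = zsc (a + (i - 1)) v + v" using zsc_succ[of "a + (i - 1)" v] by simp
  show ?case using a b step2 by (simp add: algebra_simps)
qed

lemma zsc_diff: "zsc (a - b) v = zsc a v - zsc b v"
  using zsc_add[of "a - b" b v] by (simp add: algebra_simps)

lemma zsc_1[simp]: "zsc 1 v = v" by (simp add: zsc_def)

definition supp :: "('p \<Rightarrow> int) \<Rightarrow> 'p set" where
  "supp x = {p. x p \<noteq> 0}"

definition LL :: "('p \<Rightarrow> 'a::ab_group_add) \<Rightarrow> ('p \<Rightarrow> int) \<Rightarrow> 'a" where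
  "LL \<beta> x = (\<Sum>p\<in>supp x. zsc (x p) (\<beta> p))"

lemma LL_eq: "finite A \<Longrightarrow> supp x \<subseteq> A \<Longrightarrow> LL \<beta> x = (\<Sum>p\<in>A. zsc (x p) (\<beta> p))"
  unfolding LL_def
  by (rule sum.mono_neutral_left) (auto simp: supp_def)

lemma supp_diff: "supp (\<lambda>p. x p - y p) \<subseteq> supp x \<union> supp y"
  by (auto simp: supp_def)

lemma supp_add: "supp (\<lambda>p. x p + y p) \<subseteq> supp x \<union> supp y"
  by (auto simp: supp_def)

lemma LL_diff:
  assumes "finite (supp x)" "finite (supp y)"
  shows "LL \<beta> (\<lambda>p. x p - y p) = LL \<beta> x - LL \<beta> y"
proof -
  let ?A = "supp x \<union> supp y"
  have "LL \<beta> (\<lambda>p. x p - y p) = (\<Sum>p\<in>?A. zsc (x p - y p) (\<beta> p))"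
    using assms supp_diff[of x y] by (intro LL_eq) auto
  also have "\<dots> = (\<Sum>p\<in>?A. zsc (x p) (\<beta> p)) - (\<Sum>p\<in>?A. zsc (y p) (\<beta> p))"
    by (simp add: zsc_diff sum_subtractf)
  also have "\<dots> = LL \<beta> x - LL \<beta> y"
    using assms LL_eq[of ?A x \<beta>] LL_eq[of ?A y \<beta>] by auto
  finally show ?thesis .
qed

lemma LL_add:
  assumes "finite (supp x)" "finite (supp y)"
  shows "LL \<beta> (\<lambda>p. x p + y p) = LL \<beta> x + LL \<beta> y"
proof -
  let ?A = "supp x \<union> supp y"
  have "LL \<beta> (\<lambda>p. x p + y p) = (\<Sum>p\<in>?A. zsc (x p + y p) (\<beta> p))"
    using assms supp_add[of x y] by (intro LL_eq) auto
  also have "\<dots> = (\<Sum>p\<in>?A. zsc (x p) (\<beta> p)) + (\<Sum>p\<in>?A. zsc (y p) (\<beta> p))"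
    by (simp add: zsc_add sum.distrib)
  also have "\<dots> = LL \<beta> x + LL \<beta> y"
    using assms LL_eq[of ?A x \<beta>] LL_eq[of ?A y \<beta>] by auto
  finally show ?thesis .
qed

lemma supp_delta: "supp (delta q) = {q}"
  by (auto simp: supp_def delta_def)

lemma LL_delta: "LL \<beta> (delta q) = \<beta> q"
  unfolding LL_def supp_delta by (simp add: delta_def)

lemma fin_diff: "finite (supp x) \<Longrightarrow> finite (supp y) \<Longrightarrow> finite (supp (\<lambda>p. x p - y p))"
  by (rule finite_subset[OF supp_diff]) simp

lemma fin_delta: "finite (supp (delta q))" by (simp add: supp_delta)

lemma LL_delta2:
  "LL \<beta> (\<lambda>p. delta a p - delta b p) = \<beta> a - \<beta> b"
  "finite (supp (\<lambda>p. delta a p - delta b p))"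
proof -
  show "LL \<beta> (\<lambda>p. delta a p - delta b p) = \<beta> a - \<beta> b"
    using LL_diff[OF fin_delta fin_delta, of \<beta> a b] LL_delta[of \<beta>] by simp
  show "finite (supp (\<lambda>p. delta a p - delta b p))"
    by (rule fin_diff[OF fin_delta fin_delta])
qed

lemma LL_delta3:
  "LL \<beta> (\<lambda>p. delta a p - delta b p - delta c p) = \<beta> a - \<beta> b - \<beta> c"
  "finite (supp (\<lambda>p. delta a p - delta b p - delta c p))"
proof -
  have f2: "finite (supp (\<lambda>p. delta a p - delta b p))" by (rule LL_delta2(2))
  show "finite (supp (\<lambda>p. delta a p - delta b p - delta c p))"
    using fin_diff[OF f2 fin_delta, of c] by simp
  have "LL \<beta> (\<lambda>p. delta a p - delta b p - delta c p)
      = LL \<beta> (\<lambda>p. delta a p - delta b p) - LL \<beta> (delta c)"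
    using LL_diff[OF f2 fin_delta, of \<beta> c] by simp
  then show "LL \<beta> (\<lambda>p. delta a p - delta b p - delta c p) = \<beta> a - \<beta> b - \<beta> c"
    using LL_delta2(1)[of \<beta> a b] LL_delta[of \<beta> c] by simp
qed

lemma tensor_null_LL:
  fixes \<beta> :: "'a::ab_group_add \<Rightarrow> 'b \<Rightarrow> 'c::ab_group_add"
  assumes x: "x \<in> tensor_null rsA Bc addB lactB"
    and addl: "\<And>a a' b. b \<in> Bc \<Longrightarrow> \<beta> (a + a') b = \<beta> a b + \<beta> a' b"
    and addr: "\<And>a b b'. b \<in> Bc \<Longrightarrow> b' \<in> Bc \<Longrightarrow> \<beta> a (addB b b') = \<beta> a b + \<beta> a b'"
    and bal: "\<And>a r b. b \<in> Bc \<Longrightarrow> \<beta> (rsA a r) b = \<beta> a (lactB r b)"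
  shows "finite (supp x) \<and> LL (case_prod \<beta>) x = 0"
  using x
proof induction
  case tn_zero then show ?case by (simp add: LL_def supp_def)
next
  case (tn_diff x y) then show ?case by (simp add: LL_diff fin_diff)
next
  case (tn_addl b a a') then show ?case by (simp add: LL_delta3 addl)
next
  case (tn_addr b b' a) then show ?case by (simp add: LL_delta3 addr)
next
  case (tn_bal b a r) then show ?case by (simp add: LL_delta2 bal)
qed

lemma formal_sum_LL:
  "finite (supp (formal_sum n xs ys)) \<and>
   LL (case_prod \<beta>) (formal_sum n xs ys) = (\<Sum>i<n. \<beta> (xs i) (ys i))"
proof (induction n)
  case 0
  have "formal_sum 0 xs ys = (\<lambda>_. 0)" by (simp add: formal_sum_def)
  then show ?case by (simp add: LL_def supp_def)
next
  case (Suc n)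
  have eq: "formal_sum (Suc n) xs ys = (\<lambda>p. formal_sum n xs ys p + delta (xs n, ys n) p)"
    unfolding formal_sum_def by (rule ext) simp
  have fn: "finite (supp (formal_sum n xs ys))" using Suc.IH by blast
  have Ln: "LL (case_prod \<beta>) (formal_sum n xs ys) = (\<Sum>i<n. \<beta> (xs i) (ys i))" using Suc.IH by blast
  have fin: "finite (supp (\<lambda>p. formal_sum n xs ys p + delta (xs n, ys n) p))"
    by (rule finite_subset[OF supp_add]) (simp add: fn fin_delta)
  have "LL (case_prod \<beta>) (\<lambda>p. formal_sum n xs ys p + delta (xs n, ys n) p)
      = (\<Sum>i<n. \<beta> (xs i) (ys i)) + \<beta> (xs n) (ys n)"
    using LL_add[OF fn fin_delta, of "case_prod \<beta>" "(xs n, ys n)"] Ln LL_delta[of "case_prod \<beta>" "(xs n, ys n)"]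
    by simp
  then show ?case using fin unfolding eq by simp
qed

lemma tensor_eq_sum:
  fixes \<beta> :: "'a::ab_group_add \<Rightarrow> 'b \<Rightarrow> 'c::ab_group_add"
  assumes te: "tensor_eq rsA Bc addB lactB n xs ys k xs' ys'"
    and addl: "\<And>a a' b. b \<in> Bc \<Longrightarrow> \<beta> (a + a') b = \<beta> a b + \<beta> a' b"
    and addr: "\<And>a b b'. b \<in> Bc \<Longrightarrow> b' \<in> Bc \<Longrightarrow> \<beta> a (addB b b') = \<beta> a b + \<beta> a b'"
    and bal: "\<And>a r b. b \<in> Bc \<Longrightarrow> \<beta> (rsA a r) b = \<beta> a (lactB r b)"
  shows "(\<Sum>i<n. \<beta> (xs i) (ys i)) = (\<Sum>i<k. \<beta> (xs' i) (ys' i))"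
proof -
  have "finite (supp (\<lambda>p. formal_sum n xs ys p - formal_sum k xs' ys' p)) \<and>
        LL (case_prod \<beta>) (\<lambda>p. formal_sum n xs ys p - formal_sum k xs' ys' p) = 0"
    using te unfolding tensor_eq_def by (rule tensor_null_LL[of _ rsA Bc addB lactB \<beta>, OF _ addl addr bal])
  then have z: "LL (case_prod \<beta>) (\<lambda>p. formal_sum n xs ys p - formal_sum k xs' ys' p) = 0" by blast
  have a: "finite (supp (formal_sum n xs ys))"
      "LL (case_prod \<beta>) (formal_sum n xs ys) = (\<Sum>i<n. \<beta> (xs i) (ys i))"
    using formal_sum_LL[of n xs ys \<beta>] by blast+
  have b: "finite (supp (formal_sum k xs' ys'))"
      "LL (case_prod \<beta>) (formal_sum k xs' ys') = (\<Sum>i<k. \<beta> (xs' i) (ys' i))"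
    using formal_sum_LL[of k xs' ys' \<beta>] by blast+
  show ?thesis using z LL_diff[OF a(1) b(1), of "case_prod \<beta>"] unfolding a(2) b(2) by simp
qed
lemma lmod_smult_zero:
  assumes N: "is_lmod_on K u N" and k0: "0 \<in> K" and x: "x \<in> carrier N"
  shows "smult N 0 x = zero N"
proof -
  have zc: "zero N \<in> carrier N"
    and as: "\<And>x y z. x \<in> carrier N \<Longrightarrow> y \<in> carrier N \<Longrightarrow> z \<in> carrier N \<Longrightarrow>
       plus N (plus N x y) z = plus N x (plus N y z)"
    and cm: "\<And>x y. x \<in> carrier N \<Longrightarrow> y \<in> carrier N \<Longrightarrow> plus N x y = plus N y x"
    and z0: "\<And>x. x \<in> carrier N \<Longrightarrow> plus N (zero N) x = x"
    and inv: "\<And>x. x \<in> carrier N \<Longrightarrow> \<exists>y\<in>carrier N. plus N x y = zero N"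
    and sc: "\<And>k x. k \<in> K \<Longrightarrow> x \<in> carrier N \<Longrightarrow> smult N k x \<in> carrier N"
    and sd: "\<And>k l x. k \<in> K \<Longrightarrow> l \<in> K \<Longrightarrow> x \<in> carrier N \<Longrightarrow>
       smult N (k + l) x = plus N (smult N k x) (smult N l x)"
    using N unfolding is_lmod_on_def by blast+
  let ?a = "smult N 0 x"
  have ac: "?a \<in> carrier N" using sc k0 x by blast
  have aa: "?a = plus N ?a ?a" using sd[OF k0 k0 x] by simp
  obtain y where y: "y \<in> carrier N" "plus N ?a y = zero N"
    using inv[OF ac] by blast
  have "zero N = plus N (plus N ?a ?a) y" using aa y by simp
  also have "\<dots> = plus N ?a (plus N ?a y)" using as ac y by blast
  also have "\<dots> = plus N ?a (zero N)" using y by simp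
  also have "\<dots> = plus N (zero N) ?a" using cm ac zc by blast
  also have "\<dots> = ?a" using z0 ac by blast
  finally show ?thesis by simp
qed

lemma central_idem_facts:
  fixes e :: "'s::ring_1"
  assumes c: "\<And>s. e * s = s * e" and idem: "e * e = e"
  shows "e * s * e = e * s" "(1 - e) * s * (1 - e) = s - e * s"
    "e * (s * t) = (e * s * e) * (e * t * e)"
    "(1 - e) * (s * t) * (1 - e) = ((1 - e) * s * (1 - e)) * ((1 - e) * t * (1 - e))"
proof -
  show 1: "e * s * e = e * s" by (metis c idem mult.assoc)
  have "(1 - e) * s * (1 - e) = s - e * s - s * e + e * s * e" by (simp add: algebra_simps)
  also have "\<dots> = s - e * s" using 1 c[of s] by simp
  finally show 2: "(1 - e) * s * (1 - e) = s - e * s" .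
  have 3: "e * t * e = e * t" by (metis c idem mult.assoc)
  have "(e * s) * (e * t) = e * (s * e) * t" by (simp add: mult.assoc)
  also have "\<dots> = e * (e * s) * t" using c[of s] by simp
  also have "\<dots> = e * (s * t)" using idem by (metis mult.assoc)
  finally show "e * (s * t) = (e * s * e) * (e * t * e)" using 1 3 by simp
  have 4: "(1 - e) * t * (1 - e) = t - e * t" by (simp add: algebra_simps 3 c[of t] idem)
  have "(s - e * s) * (t - e * t) = s * t - s * (e * t) - e * s * t + e * s * (e * t)"
    by (simp add: algebra_simps)
  also have "s * (e * t) = e * s * t" by (metis c mult.assoc)
  also have "e * s * (e * t) = e * s * t"
    by (metis c idem mult.assoc)
  finally have "(s - e * s) * (t - e * t) = s * t - e * (s * t)" by (simp add: mult.assoc)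
  moreover have "(1 - e) * (s * t) * (1 - e) = s * t - e * (s * t)"
    by (simp add: algebra_simps) (metis c idem mult.assoc)
  ultimately show "(1 - e) * (s * t) * (1 - e) = ((1 - e) * s * (1 - e)) * ((1 - e) * t * (1 - e))"
    using 2 4 by simp
qed


theorem proposition3p10:
  fixes ls :: "'s::ring_1 \<Rightarrow> 'm::ab_group_add \<Rightarrow> 'm"
    and rs :: "'m \<Rightarrow> 'r::ring_1 \<Rightarrow> 'm"
    and n :: nat and ms :: "nat \<Rightarrow> 'm" and fs :: "nat \<Rightarrow> 'm \<Rightarrow> 's"
  assumes bimod: "bimodule ls rs"
    and natfull: "coind_naturally_full ls rs TYPE('q)"
    and fs_dual: "\<forall>i<n. fs i \<in> dualM ls"
    and invariant: "\<forall>s. tensor_eq_dual ls rs n (\<lambda>i. ls s (ms i)) fs n ms (\<lambda>i x. fs i x * s)"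
    and cond: "\<forall>m. tensor_eq_End ls rs 1 (\<lambda>_. m) (\<lambda>_. id) n ms (\<lambda>i x. ls (fs i x) m)"
  shows "let e = (\<Sum>i<n. fs i (ms i));
             S1 = {e * s * e | s. True};
             S2 = {(1 - e) * s * (1 - e) | s. True}
         in (\<forall>s. e * s = s * e) \<and> e * e = e \<and>
            (\<forall>s m. ls s m = ls (s * e) m \<and> ls (s * e) m = ls (e * s * e) m) \<and>
            (\<exists>\<phi> :: 's \<Rightarrow> 's \<times> 's. bij_betw \<phi> UNIV (S1 \<times> S2) \<and>
                 (\<forall>s t. \<phi> (s + t) = (fst (\<phi> s) + fst (\<phi> t), snd (\<phi> s) + snd (\<phi> t))) \<and>
                 (\<forall>s t. \<phi> (s * t) = (fst (\<phi> s) * fst (\<phi> t), snd (\<phi> s) * snd (\<phi> t))) \<and>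
                 \<phi> 1 = (e, 1 - e)) \<and>
            is_generator_on S1 e (Mmod ls) TYPE('v)"
proof -
  define e where "e = (\<Sum>i<n. fs i (ms i))"
  define S1 where "S1 = {e * s * e | s. True}"
  define S2 where "S2 = {(1 - e) * s * (1 - e) | s. True}"
  have ls_adds: "\<And>s t m. ls (s + t) m = ls s m + ls t m"
    using bimod unfolding bimodule_def by simp
  have ls_mult: "\<And>s t m. ls (s * t) m = ls s (ls t m)"
    using bimod unfolding bimodule_def by simp
  have ls_0: "ls 0 m = 0" for m using ls_adds[of 0 0 m] by simp
  have ls_sum: "ls (\<Sum>i<k. g i) m = (\<Sum>i<k. ls (g i) m)" for k :: nat and g m
    by (induct k) (simp_all add: ls_0 ls_adds)
  have fadd: "fs i (a + b) = fs i a + fs i b" and flin: "fs i (ls k a) = k * fs i a" if "i < n" for i a b k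
    using fs_dual that unfolding dualM_def lhom_on_def Mmod_def Smod_def by auto
  have e_id: "ls e m = m" for m
  proof -
    have cm: "tensor_eq rs (EndM ls) (\<lambda>f g x. f x + g x) (\<lambda>r f x. f (rs x r)) 1 (\<lambda>_. m) (\<lambda>_. id) n ms
              (\<lambda>i x. ls (fs i x) m)" using cond by blast
    have ad: "b (a + a') = b a + b a'" if "b \<in> EndM ls" for a a' b
        using that unfolding EndM_def lhom_on_def Mmod_def by auto
    have "(\<Sum>i<1::nat. id m) = (\<Sum>i<n. ls (fs i (ms i)) m)"
      using tensor_eq_sum[OF cm, where \<beta> = "\<lambda>a g. g a"] ad by simp
    then have "m = (\<Sum>i<n. ls (fs i (ms i)) m)" by simp
    then show ?thesis by (simp add: e_def ls_sum)
  qed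
  have central: "e * s = s * e" for s
  proof -
    have cm: "tensor_eq rs (dualM ls) (\<lambda>f g x. f x + g x) (\<lambda>r f x. f (rs x r)) n (\<lambda>i. ls s (ms i)) fs n ms
              (\<lambda>i x. fs i x * s)" using invariant by blast
    have ad: "b (a + a') = b a + b a'" if "b \<in> dualM ls" for a a' b
        using that unfolding dualM_def lhom_on_def Mmod_def Smod_def by auto
    have "(\<Sum>i<n. fs i (ls s (ms i))) = (\<Sum>i<n. fs i (ms i) * s)"
      using tensor_eq_sum[OF cm, where \<beta> = "\<lambda>a f. f a"] ad by simp
    moreover have "(\<Sum>i<n. fs i (ls s (ms i))) = (\<Sum>i<n. s * fs i (ms i))"
      by (rule sum.cong) (simp_all add: flin)
    ultimately have "(\<Sum>i<n. s * fs i (ms i)) = (\<Sum>i<n. fs i (ms i) * s)"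
      by simp
    then show ?thesis by (simp add: e_def sum_distrib_left sum_distrib_right)
  qed
  have fe: "e * fs i m = fs i m" if "i < n" for i m
    using flin[OF that, of e m] e_id by simp
  have idem: "e * e = e"
  proof -
    have "e * e = (\<Sum>i<n. e * fs i (ms i))" by (simp add: e_def sum_distrib_left)
    also have "\<dots> = e" unfolding e_def by (rule sum.cong) (simp_all add: fe[unfolded e_def])
    finally show ?thesis .
  qed
  have CF: "e * s * e = e * s" "(1 - e) * s * (1 - e) = s - e * s"
    "e * (s * t) = (e * s * e) * (e * t * e)"
    "(1 - e) * (s * t) * (1 - e) = ((1 - e) * s * (1 - e)) * ((1 - e) * t * (1 - e))" for s t
    using central_idem_facts[OF central idem] by blast+
  have S1_iff: "y \<in> S1 \<longleftrightarrow> e * y = y" for y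
  proof
    assume "y \<in> S1" then obtain s where "y = e * s * e" unfolding S1_def by blast
    then show "e * y = y" using idem by (simp add: CF(1) mult.assoc[symmetric])
  next
    assume "e * y = y" then have "y = e * y * e" using CF(1)[of y] by simp
    then show "y \<in> S1" unfolding S1_def by blast
  qed
  have part1: "\<forall>s m. ls s m = ls (s * e) m \<and> ls (s * e) m = ls (e * s * e) m"
    using e_id ls_mult CF(1) central by metis
  define \<phi> where "\<phi> = (\<lambda>s::'s. (e * s * e, (1 - e) * s * (1 - e)))"
  have phi_add: "\<forall>s t. \<phi> (s + t) = (fst (\<phi> s) + fst (\<phi> t), snd (\<phi> s) + snd (\<phi> t))"
    unfolding \<phi>_def by (simp add: algebra_simps)
  have phi_mult: "\<forall>s t. \<phi> (s * t) = (fst (\<phi> s) * fst (\<phi> t), snd (\<phi> s) * snd (\<phi> t))"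
  proof (intro allI)
    fix s t
    have "e * (s * t) * e = (e * s * e) * (e * t * e)" using CF(1)[of "s * t"] CF(3)[of s t] by simp
    then show "\<phi> (s * t) = (fst (\<phi> s) * fst (\<phi> t), snd (\<phi> s) * snd (\<phi> t))"
      unfolding \<phi>_def using CF(4)[of s t] by simp
  qed
  have phi1: "\<phi> 1 = (e, 1 - e)"
    unfolding \<phi>_def using CF(1)[of 1] CF(2)[of 1] idem by simp
  have bij: "bij_betw \<phi> UNIV (S1 \<times> S2)"
  proof (rule bij_betwI')
    fix s t
    show "(\<phi> s = \<phi> t) = (s = t)"
    proof
      assume "\<phi> s = \<phi> t"
      then have "e * s = e * t" "s - e * s = t - e * t" unfolding \<phi>_def using CF(1,2) by auto
      then show "s = t" by (metis diff_add_cancel)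
    qed simp
  next
    fix s show "\<phi> s \<in> S1 \<times> S2" unfolding \<phi>_def S1_def S2_def by blast
  next
    fix y assume "y \<in> S1 \<times> S2"
    then obtain a b where y: "y = (e * a * e, (1 - e) * b * (1 - e))" unfolding S1_def S2_def by blast
    define s where "s = e * a + (b - e * b)"
    have "e * s = e * a"
      unfolding s_def by (simp add: algebra_simps mult.assoc[symmetric] idem)
    moreover have "e * a * e = e * a" "(1 - e) * b * (1 - e) = b - e * b" "(1 - e) * s * (1 - e) = s - e * s"
      using CF(1,2) by blast+
    ultimately have "\<phi> s = y" unfolding \<phi>_def y using CF(1)[of s] by (simp add: s_def)
    then show "\<exists>s\<in>UNIV. y = \<phi> s" by auto
  qed
  have fS1: "fs i m \<in> S1" if "i < n" for i m using fe[OF that] S1_iff by blast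
  have gen: "is_generator_on S1 e (Mmod ls) TYPE('v)"
    unfolding is_generator_on_def
  proof (intro allI impI ballI)
    fix N :: "('s, 'v) lmodule" and x
    assume N: "is_lmod_on S1 e N" and x: "x \<in> carrier N"
    have sc: "\<And>k x. k \<in> S1 \<Longrightarrow> x \<in> carrier N \<Longrightarrow> smult N k x \<in> carrier N"
      and sd: "\<And>k l x. k \<in> S1 \<Longrightarrow> l \<in> S1 \<Longrightarrow> x \<in> carrier N \<Longrightarrow>
       smult N (k + l) x = plus N (smult N k x) (smult N l x)"
      and sm: "\<And>k l x. k \<in> S1 \<Longrightarrow> l \<in> S1 \<Longrightarrow> x \<in> carrier N \<Longrightarrow>
       smult N (k * l) x = smult N k (smult N l x)"
      and su: "\<And>x. x \<in> carrier N \<Longrightarrow> smult N e x = x"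
      using N unfolding is_lmod_on_def by blast+
    have z1: "0 \<in> S1" using S1_iff by simp
    have hom: "(\<lambda>m. smult N (fs j m) x) \<in> lhom_on S1 (Mmod ls) N" if j: "j < n" for j
      unfolding lhom_on_def Mmod_def
      using sc[OF fS1[OF j] x] sd[OF fS1[OF j] fS1[OF j] x] sm[OF _ fS1[OF j] x]
      by (auto simp: fadd[OF j] flin[OF j])
    have sumS1: "(\<Sum>j<k. fs j (ms j)) \<in> S1" if "k \<le> n" for k
      using that fe by (simp add: S1_iff sum_distrib_left)
    have ms_eq: "msum N k (\<lambda>j. smult N (fs j (ms j)) x) = smult N (\<Sum>j<k. fs j (ms j)) x"
      if "k \<le> n" for k
      using that
    proof (induction k)
      case 0 then show ?case using lmod_smult_zero[OF N z1 x] by simp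
    next
      case (Suc k)
      then have "k < n" by simp
      then show ?case using Suc sd[OF sumS1[of k] fS1 x] by simp
    qed
    show "\<exists>k hs ms. (\<forall>j<k. hs j \<in> lhom_on S1 (Mmod ls) N) \<and> x = msum N k (\<lambda>j. hs j (ms j))"
    proof (intro exI conjI)
      show "\<forall>j<n. (\<lambda>j m. smult N (fs j m) x) j \<in> lhom_on S1 (Mmod ls) N" using hom by blast
      show "x = msum N n (\<lambda>j. (\<lambda>j m. smult N (fs j m) x) j (ms j))"
        using ms_eq[of n] su[OF x] by (simp add: e_def)
    qed
  qed
  show ?thesis
    unfolding Let_def e_def[symmetric] S1_def[symmetric] S2_def[symmetric]
    using central idem part1 bij phi_add phi_mult phi1 gen by blast
qed

end
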